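(* Let $C\subseteq 2^X$ be an ample class and $r:C\to X(C)$ a representation map. Then: (C1) for every $c\in C$, the cube of $2^X$ with support $r(c)$ that contains $c$ is contained in $C$ (i.e. all out-neighbours of $c$ under $o_r$ belong to a cube of $C$); (C2) for every cube $B$ of $C$, there is a unique $c\in B$ with $r(c)\cap\mathrm{supp}(B)=\varnothing$, i.e. $c$ is the unique sink of $o_r$ restricted to the edges of $B$; consequently $o_r$ is a unique sink orientation on each cube of $C$.
   Context: $X$ is finite; concepts are identified with characteristic functions; $C|Y=\{c|Y:c\in C\}$; $Y$ is shattered by $C$ if $C|Y=2^Y$. A cube of $2^X$ is $\{T\cup Z:Z\subseteq Y\}$, $Y\subseteq X$, $T\subseteq X\setminus Y$, support $\mathrm{supp}=Y$; a cube of $C$ is one contained in $C$. $C$ is ample if every shattered set is the support of a cube of $C$; $X(C)$ is the family of shattered sets. A representation map is a bijection $r:C\to X(C)$ with $c|(r(c)\cup r(c'))\ne c'|(r(c)\cup r(c'))$ for all distinct $c,c'$. For a representation map and any two concepts $c,c'\in C$ with $c\Delta c'=\{x\}$, one has $r(c)\Delta r(c')=\{x\}$; the orientation $o_r$ of the graph $G(C)$ (edges between concepts at Hamming distance 1) orients such an edge from $c$ to $c'$ iff $x\in r(c)\setminus r(c')$. An orientation of a cube is a unique sink orientation if every subcube has exactly one sink (vertex with no outgoing edge inside that subcube). *)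

theory Defs
  imports Main
begin

text \<open>Concepts on a finite domain X are identified with subsets of X
(characteristic functions); a concept class is a set C of subsets of X.\<close>

definition restr :: "'a set set \<Rightarrow> 'a set \<Rightarrow> 'a set set" where
  "restr C Y = (\<lambda>c. c \<inter> Y) ` C"

definition shatters :: "'a set set \<Rightarrow> 'a set \<Rightarrow> bool" where
  "shatters C Y \<longleftrightarrow> restr C Y = Pow Y"

text \<open>The cube of 2^X with support Y and base T (T disjoint from Y).\<close>
definition cube :: "'a set \<Rightarrow> 'a set \<Rightarrow> 'a set set" where
  "cube T Y = {T \<union> Z | Z. Z \<subseteq> Y}"

definition is_cube :: "'a set \<Rightarrow> 'a set \<Rightarrow> 'a set \<Rightarrow> bool" where
  "is_cube X T Y \<longleftrightarrow> Y \<subseteq> X \<and> T \<subseteq> X - Y"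

definition shattered_sets :: "'a set \<Rightarrow> 'a set set \<Rightarrow> 'a set set" where
  "shattered_sets X C = {Y. Y \<subseteq> X \<and> shatters C Y}"

definition ample :: "'a set \<Rightarrow> 'a set set \<Rightarrow> bool" where
  "ample X C \<longleftrightarrow> (\<forall>Y \<in> shattered_sets X C. \<exists>T. is_cube X T Y \<and> cube T Y \<subseteq> C)"

definition representation_map :: "'a set \<Rightarrow> 'a set set \<Rightarrow> ('a set \<Rightarrow> 'a set) \<Rightarrow> bool" where
  "representation_map X C r \<longleftrightarrow> bij_betw r C (shattered_sets X C) \<and>
     (\<forall>c\<in>C. \<forall>c'\<in>C. c \<noteq> c' \<longrightarrow> c \<inter> (r c \<union> r c') \<noteq> c' \<inter> (r c \<union> r c'))"

definition arc :: "'a set set \<Rightarrow> ('a set \<Rightarrow> 'a set) \<Rightarrow> 'a set \<Rightarrow> 'a set \<Rightarrow> bool" where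
  "arc C r c c' \<longleftrightarrow> c \<in> C \<and> c' \<in> C \<and>
     (\<exists>x. (c - c') \<union> (c' - c) = {x} \<and> x \<in> r c - r c')"

definition is_sink :: "'a set set \<Rightarrow> ('a set \<Rightarrow> 'a set) \<Rightarrow> 'a set set \<Rightarrow> 'a set \<Rightarrow> bool" where
  "is_sink C r S c \<longleftrightarrow> c \<in> S \<and> \<not> (\<exists>c'\<in>S. arc C r c c')"

definition unique_sink_orientation ::
  "'a set \<Rightarrow> 'a set set \<Rightarrow> ('a set \<Rightarrow> 'a set) \<Rightarrow> 'a set set \<Rightarrow> bool" where
  "unique_sink_orientation X C r B \<longleftrightarrow>
     (\<forall>T' Y'. is_cube X T' Y' \<and> cube T' Y' \<subseteq> B \<longrightarrow> (\<exists>!c. is_sink C r (cube T' Y') c))"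

end

theory Submission
  imports Defs
begin

lemma mem_cube_iff:
  assumes "T \<inter> Y = {}"
  shows "q \<in> cube T Y \<longleftrightarrow> q - Y = T"
proof
  assume "q \<in> cube T Y"
  then obtain Z where "q = T \<union> Z" "Z \<subseteq> Y" unfolding cube_def by blast
  then show "q - Y = T" using assms by blast
next
  assume h: "q - Y = T"
  have "q = T \<union> (q \<inter> Y)" using h by blast
  then show "q \<in> cube T Y" unfolding cube_def by blast
qed

lemma restr_restr: "Y \<subseteq> S \<Longrightarrow> restr (restr C S) Y = restr C Y"
  unfolding restr_def by (auto simp: image_image Int_assoc Int_absorb1 inf.absorb_iff2)

lemma shatters_iff: "shatters C Y \<longleftrightarrow> Pow Y \<subseteq> restr C Y"
  unfolding shatters_def restr_def by blast

lemma pajor: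
  assumes "finite S"
  shows "D \<subseteq> Pow S \<Longrightarrow> card D \<le> card (shattered_sets S D)"
  using assms
proof (induction S arbitrary: D rule: finite_induct)
  case empty
  then have "D = {} \<or> D = {{}}" by (simp add: subset_singletonD)
  then show ?case
  proof
    assume "D = {}" then show ?thesis by simp
  next
    assume d: "D = {{}}"
    have "shattered_sets {} D = {{}}" unfolding d shattered_sets_def shatters_def restr_def by auto
    then show ?thesis using d by simp
  qed
next
  case (insert x S)
  define D0 where "D0 = restr D S"
  define D1 where "D1 = {t \<in> Pow S. t \<in> D \<and> insert x t \<in> D}"
  define A0 where "A0 = {d\<in>D. x \<notin> d}"
  define A1 where "A1 = {d\<in>D. x \<in> d}"
  define B where "B = (\<lambda>d. d - {x}) ` A1"
  have finD: "finite D" using insert.prems insert.hyps(1) finite_subset by (metis finite_Pow_iff finite_insert)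
  have D0eq: "D0 = A0 \<union> B"
  proof -
    have "\<And>d. d \<in> D \<Longrightarrow> d \<inter> S = d - {x}" using insert.prems insert.hyps(2) by blast
    then show ?thesis unfolding D0_def restr_def A0_def B_def A1_def by auto
  qed
  have D1eq: "D1 = A0 \<inter> B"
  proof
    show "D1 \<subseteq> A0 \<inter> B"
    proof
      fix t assume "t \<in> D1"
      then have t: "t \<subseteq> S" "t \<in> D" "insert x t \<in> D" unfolding D1_def by auto
      have "x \<notin> t" using t insert.hyps(2) by blast
      then have "t = insert x t - {x}" by simp
      then show "t \<in> A0 \<inter> B" using t \<open>x \<notin> t\<close> unfolding A0_def B_def A1_def by blast
    qed
  next
    show "A0 \<inter> B \<subseteq> D1"
    proof
      fix t assume "t \<in> A0 \<inter> B"
      then obtain d where d: "d \<in> D" "x \<in> d" "t = d - {x}" "t \<in> D" "x \<notin> t" unfolding A0_def B_def A1_def by blast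
      have "insert x t = d" using d by blast
      moreover have "t \<subseteq> S" using d insert.prems by blast
      ultimately show "t \<in> D1" using d unfolding D1_def by auto
    qed
  qed
  have cB: "card B = card A1"
    unfolding B_def by (rule card_image) (auto simp: inj_on_def A1_def)
  have finA: "finite A0" "finite B" "finite A1" using finD unfolding A0_def A1_def B_def by auto
  have "card D = card A0 + card A1"
  proof -
    have "D = A0 \<union> A1" "A0 \<inter> A1 = {}" unfolding A0_def A1_def by auto
    then show ?thesis using finA card_Un_disjoint by metis
  qed
  then have cD: "card D = card D0 + card D1"
    using card_Un_Int[OF finA(1) finA(2)] cB D0eq D1eq by simp
  have D0S: "D0 \<subseteq> Pow S" unfolding D0_def restr_def by auto
  have D1S: "D1 \<subseteq> Pow S" unfolding D1_def by auto
  have i0: "card D0 \<le> card (shattered_sets S D0)" using insert.IH D0S by blast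
  have i1: "card D1 \<le> card (shattered_sets S D1)" using insert.IH D1S by blast
  define E0 where "E0 = shattered_sets S D0"
  define E1 where "E1 = insert x ` shattered_sets S D1"
  have fE: "finite E0" "finite E1" unfolding E0_def E1_def shattered_sets_def using insert.hyps(1) by auto
  have cE1: "card E1 = card (shattered_sets S D1)"
    unfolding E1_def
    by (rule card_image) (use insert.hyps(2) in \<open>auto simp: inj_on_def shattered_sets_def\<close>)
  have dis: "E0 \<inter> E1 = {}" unfolding E0_def E1_def shattered_sets_def using insert.hyps(2) by auto
  have sub0: "E0 \<subseteq> shattered_sets (insert x S) D"
  proof
    fix Y assume "Y \<in> E0"
    then have Y: "Y \<subseteq> S" "restr D0 Y = Pow Y" unfolding E0_def shattered_sets_def shatters_def by auto
    have "restr D Y = Pow Y" using Y restr_restr[OF Y(1), of D] unfolding D0_def by simp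
    then show "Y \<in> shattered_sets (insert x S) D" using Y unfolding shattered_sets_def shatters_def by auto
  qed
  have sub1: "E1 \<subseteq> shattered_sets (insert x S) D"
  proof
    fix Y' assume "Y' \<in> E1"
    then obtain Y where Y: "Y' = insert x Y" "Y \<subseteq> S" "Pow Y \<subseteq> restr D1 Y"
      unfolding E1_def shattered_sets_def shatters_iff by auto
    have "Pow (insert x Y) \<subseteq> restr D (insert x Y)"
    proof
      fix Z assume Z: "Z \<in> Pow (insert x Y)"
      then have "Z - {x} \<in> restr D1 Y" using Y by blast
      then obtain t where t: "t \<in> D1" "Z - {x} = t \<inter> Y" unfolding restr_def by auto
      have t2: "t \<subseteq> S" "t \<in> D" "insert x t \<in> D" using t unfolding D1_def by auto
      have xt: "x \<notin> t" using t2 insert.hyps(2) by blast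
      show "Z \<in> restr D (insert x Y)"
      proof (cases "x \<in> Z")
        case True
        have "Z = insert x t \<inter> insert x Y" using True t(2) Z by blast
        then show ?thesis using t2 unfolding restr_def by blast
      next
        case False
        have "Z = t \<inter> insert x Y" using False t(2) Z xt by blast
        then show ?thesis using t2 unfolding restr_def by blast
      qed
    qed
    then show "Y' \<in> shattered_sets (insert x S) D"
      using Y unfolding shattered_sets_def shatters_iff by auto
  qed
  have "card D \<le> card E0 + card E1" using cD i0 i1 cE1 unfolding E0_def by simp
  also have "\<dots> = card (E0 \<union> E1)" using card_Un_disjoint[OF fE dis] by simp
  also have "\<dots> \<le> card (shattered_sets (insert x S) D)"
    by (rule card_mono) (use insert.hyps(1) sub0 sub1 in \<open>auto simp: shattered_sets_def\<close>)
  finally show ?case .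
qed

lemma rm_props:
  assumes "representation_map X C r"
  shows "\<And>d. d \<in> C \<Longrightarrow> r d \<subseteq> X"
    and "inj_on r C" and "r ` C = shattered_sets X C"
    and "\<And>d d'. d \<in> C \<Longrightarrow> d' \<in> C \<Longrightarrow> d \<inter> (r d \<union> r d') = d' \<inter> (r d \<union> r d') \<Longrightarrow> d = d'"
proof -
  have b: "bij_betw r C (shattered_sets X C)" using assms unfolding representation_map_def by simp
  show "inj_on r C" using b by (simp add: bij_betw_def)
  show im: "r ` C = shattered_sets X C" using b by (simp add: bij_betw_def)
  show "\<And>d. d \<in> C \<Longrightarrow> r d \<subseteq> X" using im unfolding shattered_sets_def by blast
  show "\<And>d d'. d \<in> C \<Longrightarrow> d' \<in> C \<Longrightarrow> d \<inter> (r d \<union> r d') = d' \<inter> (r d \<union> r d') \<Longrightarrow> d = d'"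
    using assms unfolding representation_map_def by blast
qed

lemma key:
  assumes fin: "finite X" and CX: "C \<subseteq> Pow X" and rm: "representation_map X C r"
    and SX: "S \<subseteq> X" and t: "t \<in> restr C S"
  shows "\<exists>d\<in>C. r d \<subseteq> S \<and> d \<inter> S = t"
proof -
  note P = rm_props[OF rm]
  define R where "R = {d\<in>C. r d \<subseteq> S}"
  have finC: "finite C" using fin CX finite_subset by blast
  have finR: "finite R" using finC unfolding R_def by simp
  have inj: "inj_on (\<lambda>d. d \<inter> S) R"
  proof (rule inj_onI)
    fix d d' assume "d \<in> R" "d' \<in> R" "d \<inter> S = d' \<inter> S"
    then show "d = d'" using P(4)[of d d'] unfolding R_def by blast
  qed
  have rR: "r ` R = {Y \<in> shattered_sets X C. Y \<subseteq> S}"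
  proof
    show "r ` R \<subseteq> {Y \<in> shattered_sets X C. Y \<subseteq> S}"
      using P(3) unfolding R_def by auto
  next
    show "{Y \<in> shattered_sets X C. Y \<subseteq> S} \<subseteq> r ` R"
    proof
      fix Y assume "Y \<in> {Y \<in> shattered_sets X C. Y \<subseteq> S}"
      then have Y: "Y \<in> r ` C" "Y \<subseteq> S" using P(3) by auto
      then obtain d where "d \<in> C" "Y = r d" by blast
      then show "Y \<in> r ` R" using Y unfolding R_def by auto
    qed
  qed
  have shS: "shatters (restr C S) Y \<longleftrightarrow> shatters C Y" if "Y \<subseteq> S" for Y
    unfolding shatters_def using restr_restr[OF that] by simp
  have sheq: "{Y \<in> shattered_sets X C. Y \<subseteq> S} = shattered_sets S (restr C S)"
    unfolding shattered_sets_def using shS SX by auto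
  have "card R = card (r ` R)"
    by (rule card_image[symmetric], rule inj_on_subset[OF P(2)]) (auto simp: R_def)
  then have cR: "card R = card (shattered_sets S (restr C S))"
    using rR sheq by simp
  have finS: "finite S" using fin SX finite_subset by blast
  have "card (restr C S) \<le> card (shattered_sets S (restr C S))"
    by (rule pajor[OF finS]) (auto simp: restr_def)
  then have le: "card (restr C S) \<le> card ((\<lambda>d. d \<inter> S) ` R)"
    using cR card_image[OF inj] by simp
  have sub: "(\<lambda>d. d \<inter> S) ` R \<subseteq> restr C S" unfolding R_def restr_def by auto
  have "(\<lambda>d. d \<inter> S) ` R = restr C S"
    by (rule card_seteq[OF _ sub le]) (simp add: restr_def finC)
  then have "t \<in> (\<lambda>d. d \<inter> S) ` R" using t by simp
  then obtain d where "d \<in> R" "t = d \<inter> S" by (rule imageE)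
  then show ?thesis unfolding R_def by blast
qed

lemma cube_exists:
  assumes fin: "finite X" and CX: "C \<subseteq> Pow X" and rm: "representation_map X C r"
    and ic: "is_cube X T Y" and sub: "cube T Y \<subseteq> C"
  shows "\<exists>c. c \<in> cube T Y \<and> r c \<inter> Y = {}"
proof -
  have TY: "T \<inter> Y = {}" "T \<subseteq> X" "Y \<subseteq> X" using ic unfolding is_cube_def by auto
  have "T \<in> cube T Y" using mem_cube_iff[OF TY(1)] TY by blast
  then have "T \<in> C" using sub by blast
  then have "T \<in> restr C (X - Y)" unfolding restr_def using TY by blast
  then obtain d where d: "d \<in> C" "r d \<subseteq> X - Y" "d \<inter> (X - Y) = T"
    using key[OF fin CX rm, of "X - Y"] by blast
  have "d - Y = T" using d CX by blast
  then show ?thesis using d mem_cube_iff[OF TY(1)] by blast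
qed

lemma cube_unique:
  assumes CX: "C \<subseteq> Pow X" and rm: "representation_map X C r"
    and ic: "is_cube X T Y" and sub: "cube T Y \<subseteq> C"
    and c: "c \<in> cube T Y" "r c \<inter> Y = {}" and c': "c' \<in> cube T Y" "r c' \<inter> Y = {}"
  shows "c = c'"
proof -
  have TY: "T \<inter> Y = {}" using ic unfolding is_cube_def by auto
  have "c - Y = T" "c' - Y = T" using c c' mem_cube_iff[OF TY] by auto
  then have "c \<inter> (r c \<union> r c') = c' \<inter> (r c \<union> r c')" using c c' by blast
  then show ?thesis using rm_props(4)[OF rm, of c c'] c c' sub by blast
qed

lemma cube_sink:
  assumes fin: "finite X" and CX: "C \<subseteq> Pow X" and rm: "representation_map X C r"
    and ic: "is_cube X T Y" and sub: "cube T Y \<subseteq> C"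
  shows "(c \<in> cube T Y \<and> r c \<inter> Y = {}) \<longleftrightarrow> is_sink C r (cube T Y) c"
proof
  have TY: "T \<inter> Y = {}" using ic unfolding is_cube_def by auto
  assume h: "c \<in> cube T Y \<and> r c \<inter> Y = {}"
  have "\<not> arc C r c c'" if "c' \<in> cube T Y" for c'
  proof
    assume "arc C r c c'"
    then obtain x where x: "(c - c') \<union> (c' - c) = {x}" "x \<in> r c" unfolding arc_def by blast
    have "c - Y = T" "c' - Y = T" using h that mem_cube_iff[OF TY] by auto
    then have "x \<in> Y" using x by blast
    then show False using x h by blast
  qed
  then show "is_sink C r (cube T Y) c" using h unfolding is_sink_def by blast
next
  have TY: "T \<inter> Y = {}" "Y \<subseteq> X" using ic unfolding is_cube_def by auto
  assume s: "is_sink C r (cube T Y) c"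
  then have cQ: "c \<in> cube T Y" unfolding is_sink_def by blast
  have "r c \<inter> Y = {}"
  proof (rule ccontr)
    assume "r c \<inter> Y \<noteq> {}"
    then obtain x where x: "x \<in> r c" "x \<in> Y" by blast
    have cX: "c \<subseteq> X" using cQ sub CX by blast
    have ic2: "is_cube X (c - {x}) {x}" unfolding is_cube_def using x TY cX by blast
    have sub2: "cube (c - {x}) {x} \<subseteq> cube T Y"
    proof
      fix q assume "q \<in> cube (c - {x}) {x}"
      then have "q - {x} = c - {x}" using mem_cube_iff[of "c - {x}" "{x}"] by blast
      moreover have "c - Y = T" using cQ mem_cube_iff[OF TY(1)] by blast
      ultimately have "q - Y = T" using x by blast
      then show "q \<in> cube T Y" using mem_cube_iff[OF TY(1)] by blast
    qed
    then obtain d where d: "d \<in> cube (c - {x}) {x}" "r d \<inter> {x} = {}"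
      using cube_exists[OF fin CX rm ic2] sub by blast
    have dx: "d - {x} = c - {x}" using d mem_cube_iff[of "c - {x}" "{x}"] by blast
    have "d \<noteq> c" using d x by blast
    then have "(c - d) \<union> (d - c) = {x}" using dx by blast
    moreover have "d \<in> C" "c \<in> C" using d sub2 sub cQ by blast+
    ultimately have "arc C r c d" using d x unfolding arc_def by blast
    then show False using s d sub2 unfolding is_sink_def by blast
  qed
  then show "c \<in> cube T Y \<and> r c \<inter> Y = {}" using cQ by blast
qed

lemma cube_image: "cube T W = (\<lambda>Z. T \<union> Z) ` Pow W"
  unfolding cube_def by auto
lemma inj_cube: "T \<inter> W = {} \<Longrightarrow> inj_on (\<lambda>Z. T \<union> Z) (Pow W)"
proof (rule inj_onI)
  fix x y assume "T \<inter> W = {}" "x \<in> Pow W" "y \<in> Pow W" "T \<union> x = T \<union> y"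
  then show "x = y" by blast
qed
lemma card_cube: "finite W \<Longrightarrow> T \<inter> W = {} \<Longrightarrow> card (cube T W) = 2 ^ card W \<and> finite (cube T W)"
proof -
  assume a: "finite W" "T \<inter> W = {}"
  have "card ((\<lambda>Z. T \<union> Z) ` Pow W) = card (Pow W)" using inj_cube[OF a(2)] by (rule card_image)
  then show ?thesis unfolding cube_image using a(1) by (simp add: card_Pow)
qed
lemma card_psubsets:
  assumes "finite A"
  shows "card {B. B \<subset> A} = 2 ^ card A - 1"
proof -
  have "{B. B \<subset> A} = Pow A - {A}" by auto
  then show ?thesis using assms by (simp add: card_Pow)
qed

lemma mobius:
  assumes finD: "finite D" and finW: "finite W"
    and h: "\<And>A. A \<subset> W \<Longrightarrow> card {d\<in>D. f d \<subseteq> A} = 2 ^ card A"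
  shows "A \<subset> W \<Longrightarrow> card {d\<in>D. f d = A} = 1"
proof (induction "card A" arbitrary: A rule: less_induct)
  case less
  have finA: "finite A" using less.prems finW finite_subset by blast
  have finP: "finite {B. B \<subset> A}" by (rule finite_subset[of _ "Pow A"]) (use finA in auto)
  have eq: "{d\<in>D. f d \<subseteq> A} = {d\<in>D. f d = A} \<union> (\<Union>B\<in>{B. B \<subset> A}. {d\<in>D. f d = B})" by auto
  have disj: "{d\<in>D. f d = A} \<inter> (\<Union>B\<in>{B. B \<subset> A}. {d\<in>D. f d = B}) = {}" by auto
  have "card (\<Union>B\<in>{B. B \<subset> A}. {d\<in>D. f d = B}) = (\<Sum>B\<in>{B. B \<subset> A}. card {d\<in>D. f d = B})"
    by (rule card_UN_disjoint) (use finP finD in auto)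
  also have "\<dots> = (\<Sum>B\<in>{B. B \<subset> A}. 1)"
  proof (rule sum.cong)
    fix B assume "B \<in> {B. B \<subset> A}"
    then have B: "B \<subset> A" by simp
    then have "card B < card A" using finA psubset_card_mono by blast
    moreover have "B \<subset> W" using B less.prems by blast
    ultimately show "card {d\<in>D. f d = B} = 1" using less.hyps by blast
  qed simp
  also have "\<dots> = 2 ^ card A - 1" using card_psubsets[OF finA] by simp
  finally have cU: "card (\<Union>B\<in>{B. B \<subset> A}. {d\<in>D. f d = B}) = 2 ^ card A - 1" .
  have "2 ^ card A = card {d\<in>D. f d \<subseteq> A}" using h less.prems by simp
  also have "\<dots> = card {d\<in>D. f d = A} + card (\<Union>B\<in>{B. B \<subset> A}. {d\<in>D. f d = B})"
  proof -
    have fU: "finite (\<Union>B\<in>{B. B \<subset> A}. {d\<in>D. f d = B})"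
      using finD by (rule finite_subset[rotated]) auto
    show ?thesis unfolding eq by (rule card_Un_disjoint) (use finD disj fU in auto)
  qed
  finally have "(2::nat) ^ card A = card {d\<in>D. f d = A} + (2 ^ card A - 1)" using cU by simp
  moreover have "(1::nat) \<le> 2 ^ card A" by simp
  ultimately show ?case by linarith
qed

lemma C1:
  assumes fin: "finite X" and CX: "C \<subseteq> Pow X" and rm: "representation_map X C r"
  shows "c \<in> C \<Longrightarrow> W \<subseteq> r c \<Longrightarrow> cube (c - W) W \<subseteq> C"
proof (induction "card W" arbitrary: c W rule: less_induct)
  case less
  note P = rm_props[OF rm]
  have WX: "W \<subseteq> X" using less.prems P(1) by blast
  have finW: "finite W" using WX fin finite_subset by blast
  have cX: "c \<subseteq> X" using less.prems CX by blast
  define Q where "Q = cube (c - W) W"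
  have TW: "(c - W) \<inter> W = {}" by blast
  have memQ: "\<And>q. q \<in> Q \<longleftrightarrow> q - W = c - W" unfolding Q_def using mem_cube_iff[OF TW] by blast
  define tp where "tp = (c - W) \<union> (W - c)"
  have topQ: "tp \<in> Q" using memQ unfolding tp_def by blast
  have others: "q \<in> C" if q: "q \<in> Q" "q \<noteq> tp" for q
  proof -
    define V where "V = (q - c) \<union> (c - q)"
    have qW: "q - W = c - W" using q memQ by blast
    have VW: "V \<subseteq> W" using qW unfolding V_def by blast
    have "V \<noteq> W"
    proof
      assume "V = W"
      have "q = tp"
      proof (intro set_eqI)
        fix e show "e \<in> q \<longleftrightarrow> e \<in> tp"
        proof (cases "e \<in> W")
          case True
          then have "e \<in> V" using \<open>V = W\<close> by simp
          then show ?thesis unfolding V_def tp_def using True by blast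
        next
          case False
          then show ?thesis using qW unfolding tp_def by blast
        qed
      qed
      then show False using q by blast
    qed
    then have "V \<subset> W" using VW by (intro psubsetI)
    then have "card V < card W" using finW psubset_card_mono by blast
    moreover have "V \<subseteq> r c" using VW less.prems by blast
    ultimately have IH: "cube (c - V) V \<subseteq> C" using less.hyps[OF \<open>card V < card W\<close>] less.prems(1) by blast
    have TV: "(c - V) \<inter> V = {}" by blast
    have "q - V = c - V" unfolding V_def by blast
    then have "q \<in> cube (c - V) V" using mem_cube_iff[OF TV] by blast
    then show "q \<in> C" using IH by blast
  qed
  have "tp \<in> C"
  proof (rule ccontr)
    assume ntop: "tp \<notin> C"
    define D where "D = C \<inter> Q"
    have DQ: "D = Q - {tp}"
    proof
      show "D \<subseteq> Q - {tp}" using ntop unfolding D_def by auto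
      show "Q - {tp} \<subseteq> D" using others unfolding D_def by auto
    qed
    have cQ: "card Q = 2 ^ card W" and finQ: "finite Q"
      using card_cube[OF finW TW] unfolding Q_def by auto
    have finD: "finite D" using finQ DQ by simp
    have cD: "card D = 2 ^ card W - 1" using DQ topQ cQ finQ by simp
    have fact1: "card {d\<in>D. r d \<inter> W \<subseteq> A} = 2 ^ card A" if A: "A \<subset> W" for A
    proof -
      have AW: "A \<subseteq> W" using A by (rule psubset_imp_subset)
      define S where "S = (X - W) \<union> A"
      have SX: "S \<subseteq> X" using AW WX unfolding S_def by blast
      have "bij_betw (\<lambda>d. d \<inter> A) {d\<in>D. r d \<inter> W \<subseteq> A} (Pow A)"
        unfolding bij_betw_def
      proof
        show "inj_on (\<lambda>d. d \<inter> A) {d\<in>D. r d \<inter> W \<subseteq> A}"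
        proof (rule inj_onI)
          fix d d' assume d: "d \<in> {d\<in>D. r d \<inter> W \<subseteq> A}" and d': "d' \<in> {d\<in>D. r d \<inter> W \<subseteq> A}"
            and eq: "d \<inter> A = d' \<inter> A"
          have a: "d - W = c - W" "d' - W = c - W" "d \<in> C" "d' \<in> C"
            using d d' memQ unfolding D_def by auto
          have b: "r d \<inter> W \<subseteq> A" "r d' \<inter> W \<subseteq> A" using d d' by auto
          have "d \<inter> (r d \<union> r d') = d' \<inter> (r d \<union> r d')"
          proof (intro set_eqI iffI)
            fix e assume e: "e \<in> d \<inter> (r d \<union> r d')"
            show "e \<in> d' \<inter> (r d \<union> r d')"
            proof (cases "e \<in> W")
              case True then show ?thesis using e b eq by blast
            next
              case False then show ?thesis using e a by blast
            qed
          next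
            fix e assume e: "e \<in> d' \<inter> (r d \<union> r d')"
            show "e \<in> d \<inter> (r d \<union> r d')"
            proof (cases "e \<in> W")
              case True then show ?thesis using e b eq by blast
            next
              case False then show ?thesis using e a by blast
            qed
          qed
          then show "d = d'" by (rule P(4)[OF a(3) a(4)])
        qed
        show "(\<lambda>d. d \<inter> A) ` {d\<in>D. r d \<inter> W \<subseteq> A} = Pow A"
        proof
          show "(\<lambda>d. d \<inter> A) ` {d\<in>D. r d \<inter> W \<subseteq> A} \<subseteq> Pow A" by auto
        next
          show "Pow A \<subseteq> (\<lambda>d. d \<inter> A) ` {d\<in>D. r d \<inter> W \<subseteq> A}"
          proof
            fix B assume B: "B \<in> Pow A"
            obtain w where w: "w \<in> W" "w \<notin> A" using psubset_imp_ex_mem[OF A] by blast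
            define q where "q = (c - W) \<union> B \<union> (c \<inter> (W - A))"
            have "q - W = c - W" using B AW unfolding q_def by blast
            then have qQ: "q \<in> Q" using memQ by blast
            have "q \<noteq> tp"
            proof
              assume "q = tp"
              then have "w \<in> q \<longleftrightarrow> w \<in> tp" by simp
              then show False using w B unfolding q_def tp_def by blast
            qed
            then have "q \<in> C" using others qQ by blast
            then have "q \<inter> S \<in> restr C S" unfolding restr_def by blast
            then obtain d where d: "d \<in> C" "r d \<subseteq> S" "d \<inter> S = q \<inter> S"
              using key[OF fin CX rm SX] by blast
            have dX: "d \<subseteq> X" using d CX by blast
            have "d - W = c - W"
            proof (intro set_eqI iffI)
              fix e assume e: "e \<in> d - W"
              then have "e \<in> S" using dX unfolding S_def by blast
              then have "e \<in> q" using e d(3) by blast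
              then show "e \<in> c - W" using e B AW unfolding q_def by blast
            next
              fix e assume e: "e \<in> c - W"
              then have "e \<in> S" "e \<in> q" using cX unfolding S_def q_def by blast+
              then show "e \<in> d - W" using e d(3) by blast
            qed
            then have "d \<in> D" using memQ d(1) unfolding D_def by blast
            moreover have "r d \<inter> W \<subseteq> A" using d(2) unfolding S_def by blast
            moreover have "d \<inter> A = B"
            proof -
              have "d \<inter> A = (d \<inter> S) \<inter> A" unfolding S_def by blast
              also have "\<dots> = q \<inter> A" using d(3) unfolding S_def by blast
              also have "\<dots> = B" using B AW unfolding q_def by blast
              finally show ?thesis .
            qed
            ultimately show "B \<in> (\<lambda>d. d \<inter> A) ` {d\<in>D. r d \<inter> W \<subseteq> A}" by blast
          qed
        qed
      qed
      then have "card {d\<in>D. r d \<inter> W \<subseteq> A} = card (Pow A)" by (rule bij_betw_same_card)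
      moreover have "finite A" using finW AW by (rule finite_subset[rotated])
      ultimately show ?thesis by (simp add: card_Pow)
    qed
    have g1: "card {d\<in>D. r d \<inter> W = A} = 1" if "A \<subset> W" for A
      using mobius[OF finD finW fact1] that by blast
    have eqU: "{d\<in>D. r d \<inter> W \<noteq> W} = (\<Union>A\<in>{A. A \<subset> W}. {d\<in>D. r d \<inter> W = A})"
    proof (intro set_eqI iffI)
      fix d assume "d \<in> {d\<in>D. r d \<inter> W \<noteq> W}"
      then have "d \<in> D" "r d \<inter> W \<subset> W" by auto
      then show "d \<in> (\<Union>A\<in>{A. A \<subset> W}. {d\<in>D. r d \<inter> W = A})" by auto
    next
      fix d assume "d \<in> (\<Union>A\<in>{A. A \<subset> W}. {d\<in>D. r d \<inter> W = A})"
      then obtain A where "A \<subset> W" "d \<in> D" "r d \<inter> W = A" by blast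
      then show "d \<in> {d\<in>D. r d \<inter> W \<noteq> W}" by auto
    qed
    have finP: "finite {A. A \<subset> W}" by (rule finite_subset[of _ "Pow W"]) (use finW in auto)
    have "card {d\<in>D. r d \<inter> W \<noteq> W} = (\<Sum>A\<in>{A. A \<subset> W}. card {d\<in>D. r d \<inter> W = A})"
      unfolding eqU by (rule card_UN_disjoint) (use finP finD in auto)
    also have "\<dots> = (\<Sum>A\<in>{A. A \<subset> W}. 1)" by (rule sum.cong) (simp_all add: g1)
    also have "\<dots> = 2 ^ card W - 1" using card_psubsets[OF finW] by simp
    finally have c1: "card {d\<in>D. r d \<inter> W \<noteq> W} = card D" using cD by simp
    have "c \<in> D" using less.prems memQ unfolding D_def by blast
    moreover have "r c \<inter> W = W" using less.prems by blast
    ultimately have "{d\<in>D. r d \<inter> W \<noteq> W} \<subset> D"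
    proof (intro psubsetI)
      show "{d\<in>D. r d \<inter> W \<noteq> W} \<subseteq> D" by blast
      assume "c \<in> D" "r c \<inter> W = W"
      then show "{d\<in>D. r d \<inter> W \<noteq> W} \<noteq> D" by auto
    qed
    then have "card {d\<in>D. r d \<inter> W \<noteq> W} < card D" using finD psubset_card_mono by blast
    then show False using c1 by simp
  qed
  then show ?case using others unfolding Q_def[symmetric] by auto
qed

theorem corollary6p2:
  fixes X :: "'a set" and C :: "'a set set" and r :: "'a set \<Rightarrow> 'a set"
  assumes "finite X" and "C \<subseteq> Pow X" and "ample X C"
    and "representation_map X C r"
  shows "(\<forall>c\<in>C. cube (c - r c) (r c) \<subseteq> C)
    \<and> (\<forall>T Y. is_cube X T Y \<and> cube T Y \<subseteq> C \<longrightarrow>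
          (\<exists>!c. c \<in> cube T Y \<and> r c \<inter> Y = {})
        \<and> (\<forall>c. (c \<in> cube T Y \<and> r c \<inter> Y = {}) \<longleftrightarrow> is_sink C r (cube T Y) c)
        \<and> unique_sink_orientation X C r (cube T Y))"
proof -
  have part: "(\<exists>!c. c \<in> cube T Y \<and> r c \<inter> Y = {})
        \<and> (\<forall>c. (c \<in> cube T Y \<and> r c \<inter> Y = {}) \<longleftrightarrow> is_sink C r (cube T Y) c)"
    if h: "is_cube X T Y" "cube T Y \<subseteq> C" for T Y
  proof (intro conjI allI)
    obtain c where c: "c \<in> cube T Y \<and> r c \<inter> Y = {}"
      using cube_exists[OF assms(1,2,4) h] by blast
    show "\<exists>!c. c \<in> cube T Y \<and> r c \<inter> Y = {}"
    proof (rule ex1I[of _ c])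
      show "c \<in> cube T Y \<and> r c \<inter> Y = {}" by (rule c)
    next
      fix c' assume "c' \<in> cube T Y \<and> r c' \<inter> Y = {}"
      then show "c' = c" using cube_unique[OF assms(2,4) h, of c' c] c by simp
    qed
  next
    fix c
    show "(c \<in> cube T Y \<and> r c \<inter> Y = {}) \<longleftrightarrow> is_sink C r (cube T Y) c"
      by (rule cube_sink[OF assms(1,2,4) h])
  qed
  have p1: "\<forall>c\<in>C. cube (c - r c) (r c) \<subseteq> C"
  proof
    fix c assume "c \<in> C"
    then show "cube (c - r c) (r c) \<subseteq> C" using C1[OF assms(1,2,4)] by blast
  qed
  have p2: "unique_sink_orientation X C r (cube T Y)"
    if h: "is_cube X T Y" "cube T Y \<subseteq> C" for T Y
    unfolding unique_sink_orientation_def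
  proof (intro allI impI)
    fix T' Y' assume h': "is_cube X T' Y' \<and> cube T' Y' \<subseteq> cube T Y"
    have h2: "is_cube X T' Y'" using h' by (rule conjunct1)
    have h3: "cube T' Y' \<subseteq> C" using h' h(2) by (meson conjunct2 subset_trans)
    have e1: "\<exists>!c. c \<in> cube T' Y' \<and> r c \<inter> Y' = {}" using part[OF h2 h3] by (rule conjunct1)
    have e2: "\<forall>c. (c \<in> cube T' Y' \<and> r c \<inter> Y' = {}) \<longleftrightarrow> is_sink C r (cube T' Y') c"
      using part[OF h2 h3] by (rule conjunct2)
    from e1 obtain c where c: "c \<in> cube T' Y' \<and> r c \<inter> Y' = {}"
      and u: "\<And>y. y \<in> cube T' Y' \<and> r y \<inter> Y' = {} \<Longrightarrow> y = c" by (elim ex1E) blast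
    show "\<exists>!c. is_sink C r (cube T' Y') c"
    proof (rule ex1I[of _ c])
      show "is_sink C r (cube T' Y') c" using e2 c by blast
    next
      fix y assume "is_sink C r (cube T' Y') y"
      then have "y \<in> cube T' Y' \<and> r y \<inter> Y' = {}" using e2 by blast
      then show "y = c" by (rule u)
    qed
  qed
  show ?thesis
  proof (rule conjI[OF p1], intro allI impI)
    fix T Y assume hh: "is_cube X T Y \<and> cube T Y \<subseteq> C"
    have h1: "is_cube X T Y" using hh by (rule conjunct1)
    have h2: "cube T Y \<subseteq> C" using hh by (rule conjunct2)
    show "(\<exists>!c. c \<in> cube T Y \<and> r c \<inter> Y = {})
        \<and> (\<forall>c. (c \<in> cube T Y \<and> r c \<inter> Y = {}) \<longleftrightarrow> is_sink C r (cube T Y) c)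
        \<and> unique_sink_orientation X C r (cube T Y)"
    proof (intro conjI)
      show "\<exists>!c. c \<in> cube T Y \<and> r c \<inter> Y = {}" using part[OF h1 h2] by (rule conjunct1)
      show "\<forall>c. (c \<in> cube T Y \<and> r c \<inter> Y = {}) \<longleftrightarrow> is_sink C r (cube T Y) c"
        using part[OF h1 h2] by (rule conjunct2)
      show "unique_sink_orientation X C r (cube T Y)" by (rule p2[OF h1 h2])
    qed
  qed
qed

end
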